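(* Assume Assumption A. Then the family of sequences $(\mu_N(\eta))_{N\ge1}$, $\eta\in E$, is ordered.
   Context: Setting: $E$ is a fixed finite set; for each $N\ge1$, $(\eta^N_t)$ is a continuous-time irreducible Markov chain on $E$ with jump rates $R_N(\eta,\xi)$ and unique invariant probability measure $\mu_N$. Ordered families: a finite family of sequences of positive reals $(a^r_N)_{N\ge1}$, $r\in\mathfrak R$, is ordered if for all $r\neq s$ the sequence $\arctan(a^r_N/a^s_N)$ converges as $N\to\infty$. Assumption A: (i) for each $\eta\neq\xi$, either $R_N(\eta,\xi)=0$ for all $N$ or $R_N(\eta,\xi)>0$ for all $N$; let $\mathbb B=\{(\eta,\xi):\eta\ne\xi,R_N(\eta,\xi)>0\}$. (ii) For every $m\ge1$ the family $\prod_{(\eta,\xi)\in\mathbb B}R_N(\eta,\xi)^{k(\eta,\xi)}$, indexed by $k:\mathbb B\to\mathbb Z_+$ with $\sum k=m$, is ordered. *)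

theory Defs
  imports Complex_Main
begin

text \<open>Sequences are indexed by N :: nat; only N \<ge> 1 matters.\<close>
definition ordered_family :: "'i set \<Rightarrow> ('i \<Rightarrow> nat \<Rightarrow> real) \<Rightarrow> bool" where
  "ordered_family I a \<longleftrightarrow> finite I \<and>
     (\<forall>r\<in>I. \<forall>N\<ge>1. a r N > 0) \<and>
     (\<forall>r\<in>I. \<forall>s\<in>I. r \<noteq> s \<longrightarrow> convergent (\<lambda>N. arctan (a r N / a s N)))"

definition jump_rel :: "('a \<Rightarrow> 'a \<Rightarrow> real) \<Rightarrow> ('a \<times> 'a) set" where
  "jump_rel R = {(x, y). x \<noteq> y \<and> R x y > 0}"

definition rate_matrix :: "('a \<Rightarrow> 'a \<Rightarrow> real) \<Rightarrow> bool" where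
  "rate_matrix R \<longleftrightarrow> (\<forall>x y. x \<noteq> y \<longrightarrow> R x y \<ge> 0)"

definition irreducible_rates :: "('a \<Rightarrow> 'a \<Rightarrow> real) \<Rightarrow> bool" where
  "irreducible_rates R \<longleftrightarrow> (\<forall>x y. x \<noteq> y \<longrightarrow> (x, y) \<in> (jump_rel R)\<^sup>+)"

text \<open>Invariant probability measure of the chain with rates R (global balance equations);
  diagonal entries of R play no role.\<close>
definition invariant_prob :: "('a::finite \<Rightarrow> 'a \<Rightarrow> real) \<Rightarrow> ('a \<Rightarrow> real) \<Rightarrow> bool" where
  "invariant_prob R \<mu> \<longleftrightarrow> (\<forall>x. \<mu> x \<ge> 0) \<and> (\<Sum>x\<in>UNIV. \<mu> x) = 1 \<and>
     (\<forall>y. (\<Sum>x\<in>UNIV - {y}. \<mu> x * R x y) = \<mu> y * (\<Sum>z\<in>UNIV - {y}. R y z))"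

definition bonds :: "(nat \<Rightarrow> 'a \<Rightarrow> 'a \<Rightarrow> real) \<Rightarrow> ('a \<times> 'a) set" where
  "bonds R = {(x, y). x \<noteq> y \<and> R 1 x y > 0}"

definition assumption_A :: "(nat \<Rightarrow> 'a::finite \<Rightarrow> 'a \<Rightarrow> real) \<Rightarrow> bool" where
  "assumption_A R \<longleftrightarrow>
     (\<forall>x y. x \<noteq> y \<longrightarrow> ((\<forall>N\<ge>1. R N x y = 0) \<or> (\<forall>N\<ge>1. R N x y > 0))) \<and>
     (\<forall>m\<ge>1. ordered_family
        {k :: 'a \<times> 'a \<Rightarrow> nat. (\<forall>p. p \<notin> bonds R \<longrightarrow> k p = 0) \<and> (\<Sum>p\<in>bonds R. k p) = m}
        (\<lambda>k N. \<Prod>p\<in>bonds R. R N (fst p) (snd p) ^ k p))"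

end

theory Submission
  imports Defs
begin

lemma tendsto_ev: "(f \<longlongrightarrow> l) F \<Longrightarrow> eventually (\<lambda>x. f x = g x) F \<Longrightarrow> (g \<longlongrightarrow> l) F"
  using tendsto_cong by metis

lemma arctan_tendsto_tan:
  fixes x :: "nat \<Rightarrow> real"
  assumes "(\<lambda>N. arctan (x N)) \<longlonglongrightarrow> \<theta>" "-(pi/2) < \<theta>" "\<theta> < pi/2"
  shows "x \<longlonglongrightarrow> tan \<theta>"
proof -
  have "cos \<theta> \<noteq> 0" using assms(2,3) cos_gt_zero_pi by force
  have "(\<lambda>N. tan (arctan (x N))) \<longlonglongrightarrow> tan \<theta>"
    by (rule isCont_tendsto_compose[OF isCont_tan]) (fact+)
  then show ?thesis by (simp add: tan_arctan)
qed

lemma arctan_inv_pos: "(x::real) > 0 \<Longrightarrow> arctan (1/x) = pi/2 - arctan x"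
  using arctan_inverse[of x] by simp

lemma ratio_self_conv:
  assumes "\<And>N. N \<ge> 1 \<Longrightarrow> (b::nat\<Rightarrow>real) N > 0"
  shows "(\<lambda>N. b N / b N) \<longlonglongrightarrow> 1"
proof (rule tendsto_eventually)
  show "\<forall>\<^sub>F N in sequentially. b N / b N = 1"
    unfolding eventually_sequentially using assms
    by (metis less_irrefl divide_self)
qed

lemma of_pos:
  assumes "ordered_family I a" "i \<in> I" "N \<ge> 1" shows "a i N > 0"
  using assms unfolding ordered_family_def by blast

lemma dich:
  assumes O: "ordered_family I a" and i: "i \<in> I" and j: "j \<in> I"
  shows "convergent (\<lambda>N. a i N / a j N) \<or> convergent (\<lambda>N. a j N / a i N)"
proof (cases "i = j")
  case True
  then show ?thesis using ratio_self_conv[of "a i"] of_pos[OF O i]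
    by (auto simp: convergent_def)
next
  case False
  then obtain \<theta> where th: "(\<lambda>N. arctan (a i N / a j N)) \<longlonglongrightarrow> \<theta>"
    using O i j unfolding ordered_family_def convergent_def by blast
  have ev: "\<forall>\<^sub>F N in sequentially. a i N / a j N > 0"
    unfolding eventually_sequentially using of_pos[OF O i] of_pos[OF O j]
    by (metis divide_pos_pos)
  have "\<theta> \<ge> 0"
    by (rule tendsto_lowerbound[OF th]) (use ev in \<open>auto elim: eventually_mono\<close>)
  moreover have "\<theta> \<le> pi/2"
    using tendsto_upperbound[OF th, of "pi/2"] arctan_ubound by (simp add: less_imp_le)
  ultimately consider "\<theta> < pi/2" | "\<theta> = pi/2" by linarith
  then show ?thesis
  proof cases
    case 1
    then have "(\<lambda>N. a i N / a j N) \<longlonglongrightarrow> tan \<theta>"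
      by (intro arctan_tendsto_tan[OF th]) (use \<open>\<theta> \<ge> 0\<close> in \<open>auto intro: less_le_trans[of _ 0] simp: pi_gt_zero\<close>)
    then show ?thesis by (auto simp: convergent_def)
  next
    case 2
    have ev2: "\<forall>\<^sub>F N in sequentially. pi/2 - arctan (a i N / a j N) = arctan (a j N / a i N)"
      using ev
    proof (rule eventually_mono)
      fix N assume p: "a i N / a j N > 0"
      have "arctan (1 / (a i N / a j N)) = pi/2 - arctan (a i N / a j N)"
        using p by (rule arctan_inv_pos)
      then show "pi/2 - arctan (a i N / a j N) = arctan (a j N / a i N)"
        using p by simp
    qed
    have "(\<lambda>N. pi/2 - arctan (a i N / a j N)) \<longlonglongrightarrow> pi/2 - \<theta>"
      by (intro tendsto_intros th)
    then have "(\<lambda>N. arctan (a j N / a i N)) \<longlonglongrightarrow> 0"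
      using 2 tendsto_cong[OF ev2] by simp
    then have "(\<lambda>N. a j N / a i N) \<longlonglongrightarrow> tan 0"
      by (intro arctan_tendsto_tan) auto
    then show ?thesis by (auto simp: convergent_def)
  qed
qed

lemma exists_max:
  assumes O: "ordered_family I a" and J: "finite J" "J \<noteq> {}" "J \<subseteq> I"
  shows "\<exists>M\<in>J. \<forall>i\<in>J. convergent (\<lambda>N. a i N / a M N)"
  using J
proof (induction J rule: finite_ne_induct)
  case (singleton x)
  then show ?case using ratio_self_conv[of "a x"] of_pos[OF O, of x]
    by (auto simp: convergent_def)
next
  case (insert x F)
  then obtain M where M: "M \<in> F" "\<forall>i\<in>F. convergent (\<lambda>N. a i N / a M N)" by auto
  have xI: "x \<in> I" and MI: "M \<in> I" using insert M by auto
  have self: "convergent (\<lambda>N. a x N / a x N)"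
    using ratio_self_conv[of "a x"] of_pos[OF O xI] by (auto simp: convergent_def)
  from dich[OF O xI MI] show ?case
  proof
    assume "convergent (\<lambda>N. a x N / a M N)"
    then show ?thesis using M by auto
  next
    assume c: "convergent (\<lambda>N. a M N / a x N)"
    have "\<forall>i\<in>F. convergent (\<lambda>N. a i N / a x N)"
    proof
      fix i assume i: "i \<in> F"
      obtain L1 where L1: "(\<lambda>N. a i N / a M N) \<longlonglongrightarrow> L1" using M i by (auto simp: convergent_def)
      obtain L2 where L2: "(\<lambda>N. a M N / a x N) \<longlonglongrightarrow> L2" using c by (auto simp: convergent_def)
      have "(\<lambda>N. a i N / a M N * (a M N / a x N)) \<longlonglongrightarrow> L1 * L2"
        by (intro tendsto_mult L1 L2)
      moreover have "\<forall>\<^sub>F N in sequentially. a i N / a M N * (a M N / a x N) = a i N / a x N"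
        unfolding eventually_sequentially
      proof (intro exI allI impI)
        fix N :: nat assume N: "N \<ge> 1"
        have "a M N \<noteq> 0" using of_pos[OF O MI N] by simp
        then show "a i N / a M N * (a M N / a x N) = a i N / a x N" by simp
      qed
      ultimately have "(\<lambda>N. a i N / a x N) \<longlonglongrightarrow> L1 * L2"
        by (rule tendsto_ev)
      then show "convergent (\<lambda>N. a i N / a x N)" by (auto simp: convergent_def)
    qed
    then show ?thesis using self by auto
  qed
qed

lemma ordered_sums:
  assumes O: "ordered_family I a" and A: "finite A" "A \<noteq> {}" and B: "finite B" "B \<noteq> {}"
    and \<phi>: "\<phi> ` A \<subseteq> I" and \<psi>: "\<psi> ` B \<subseteq> I"
  shows "convergent (\<lambda>N. arctan ((\<Sum>x\<in>A. a (\<phi> x) N) / (\<Sum>y\<in>B. a (\<psi> y) N)))"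
proof -
  define J where "J = \<phi> ` A \<union> \<psi> ` B"
  have J: "finite J" "J \<noteq> {}" "J \<subseteq> I" using A B \<phi> \<psi> by (auto simp: J_def)
  obtain M where M: "M \<in> J" "\<forall>i\<in>J. convergent (\<lambda>N. a i N / a M N)"
    using exists_max[OF O J] by blast
  have MI: "M \<in> I" using M J by auto
  define c where "c i = lim (\<lambda>N. a i N / a M N)" for i
  have c: "(\<lambda>N. a i N / a M N) \<longlonglongrightarrow> c i" if "i \<in> J" for i
    using M that by (simp add: c_def convergent_LIMSEQ_iff)
  have cnn: "c i \<ge> 0" if "i \<in> J" for i
  proof (rule tendsto_lowerbound[OF c[OF that]])
    have "i \<in> I" using that J by auto
    then show "\<forall>\<^sub>F N in sequentially. 0 \<le> a i N / a M N"
      unfolding eventually_sequentially using of_pos[OF O _] MI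
      by (metis less_imp_le divide_pos_pos)
  qed simp
  have cM: "c M = 1"
    using c[OF M(1)] ratio_self_conv[of "a M"] of_pos[OF O MI] LIMSEQ_unique by blast
  define sA where "sA N = (\<Sum>x\<in>A. a (\<phi> x) N)" for N
  define sB where "sB N = (\<Sum>y\<in>B. a (\<psi> y) N)" for N
  define s where "s = (\<Sum>x\<in>A. c (\<phi> x))"
  define t where "t = (\<Sum>y\<in>B. c (\<psi> y))"
  have sA_pos: "sA N > 0" if "N \<ge> 1" for N
    unfolding sA_def using A \<phi> that by (intro sum_pos) (auto intro!: of_pos[OF O])
  have sB_pos: "sB N > 0" if "N \<ge> 1" for N
    unfolding sB_def using B \<psi> that by (intro sum_pos) (auto intro!: of_pos[OF O])
  have sAl: "(\<lambda>N. sA N / a M N) \<longlonglongrightarrow> s"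
    unfolding sA_def s_def sum_divide_distrib
    by (intro tendsto_sum c) (auto simp: J_def)
  have sBl: "(\<lambda>N. sB N / a M N) \<longlonglongrightarrow> t"
    unfolding sB_def t_def sum_divide_distrib
    by (intro tendsto_sum c) (auto simp: J_def)
  have s0: "s \<ge> 0" unfolding s_def by (intro sum_nonneg cnn) (auto simp: J_def)
  have t0: "t \<ge> 0" unfolding t_def by (intro sum_nonneg cnn) (auto simp: J_def)
  have "s > 0 \<or> t > 0"
  proof (cases "M \<in> \<phi> ` A")
    case True
    then obtain x where x: "x \<in> A" "\<phi> x = M" by auto
    have "c (\<phi> x) \<le> s" unfolding s_def
      using A x by (intro member_le_sum cnn) (auto simp: J_def)
    then show ?thesis using x cM by auto
  next
    case False
    then obtain x where x: "x \<in> B" "\<psi> x = M" using M(1) by (auto simp: J_def)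
    have "c (\<psi> x) \<le> t" unfolding t_def
      using B x by (intro member_le_sum cnn) (auto simp: J_def)
    then show ?thesis using x cM by auto
  qed
  then consider "s > 0" | "t > 0" by blast
  then show ?thesis
  proof cases
    case 1
    have "(\<lambda>N. pi/2 - arctan ((sB N / a M N) / (sA N / a M N))) \<longlonglongrightarrow> pi/2 - arctan (t / s)"
      using 1 by (intro tendsto_intros sAl sBl) auto
    moreover have "\<forall>\<^sub>F N in sequentially. pi/2 - arctan ((sB N / a M N) / (sA N / a M N)) = arctan (sA N / sB N)"
      unfolding eventually_sequentially
    proof (intro exI allI impI)
      fix N :: nat assume N: "N \<ge> 1"
      have "(sB N / a M N) / (sA N / a M N) = 1 / (sA N / sB N)"
        using of_pos[OF O MI N] sA_pos[OF N] sB_pos[OF N] by (simp add: field_simps)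
      then show "pi/2 - arctan ((sB N / a M N) / (sA N / a M N)) = arctan (sA N / sB N)"
        using arctan_inv_pos[of "sA N / sB N"] sA_pos[OF N] sB_pos[OF N] by simp
    qed
    ultimately have "(\<lambda>N. arctan (sA N / sB N)) \<longlonglongrightarrow> pi/2 - arctan (t / s)"
      by (rule tendsto_ev)
    then show ?thesis unfolding sA_def sB_def by (auto simp: convergent_def)
  next
    case 2
    have "(\<lambda>N. arctan ((sA N / a M N) / (sB N / a M N))) \<longlonglongrightarrow> arctan (s / t)"
      using 2 by (intro tendsto_intros sAl sBl) auto
    moreover have "\<forall>\<^sub>F N in sequentially. arctan ((sA N / a M N) / (sB N / a M N)) = arctan (sA N / sB N)"
      unfolding eventually_sequentially
    proof (intro exI allI impI)
      fix N :: nat assume N: "N \<ge> 1"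
      have "a M N \<noteq> 0" using of_pos[OF O MI N] by simp
      then have "(sA N / a M N) / (sB N / a M N) = sA N / sB N"
        by (simp add: field_simps)
      then show "arctan ((sA N / a M N) / (sB N / a M N)) = arctan (sA N / sB N)" by (rule arg_cong)
    qed
    ultimately have "(\<lambda>N. arctan (sA N / sB N)) \<longlonglongrightarrow> arctan (s / t)"
      by (rule tendsto_ev)
    then show ?thesis unfolding sA_def sB_def by (auto simp: convergent_def)
  qed
qed


definition trees :: "('a \<times> 'a) set \<Rightarrow> 'a \<Rightarrow> ('a \<Rightarrow> 'a) set" where
  "trees B x = {f. f x = x \<and> (\<forall>v. v \<noteq> x \<longrightarrow> (v, f v) \<in> B) \<and> (\<forall>v. \<exists>n. (f^^n) v = x)}"

definition cyc :: "('a \<times> 'a) set \<Rightarrow> 'a \<Rightarrow> ('a \<Rightarrow> 'a) set" where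
  "cyc B z = {g. (\<forall>v. (v, g v) \<in> B) \<and> (\<forall>v. \<exists>n. (g^^n) v = z)}"

definition tw :: "('a::finite \<Rightarrow> 'a \<Rightarrow> real) \<Rightarrow> 'a \<Rightarrow> ('a \<Rightarrow> 'a) \<Rightarrow> real" where
  "tw r x f = (\<Prod>v\<in>UNIV-{x}. r v (f v))"

definition gw :: "('a::finite \<Rightarrow> 'a \<Rightarrow> real) \<Rightarrow> ('a \<Rightarrow> 'a) \<Rightarrow> real" where
  "gw r g = (\<Prod>v\<in>UNIV. r v (g v))"

definition wt :: "('a \<times> 'a) set \<Rightarrow> ('a::finite \<Rightarrow> 'a \<Rightarrow> real) \<Rightarrow> 'a \<Rightarrow> real" where
  "wt B r x = (\<Sum>f\<in>trees B x. tw r x f)"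

lemma reach_upd: "(g^^n) v = y \<Longrightarrow> \<exists>m. ((g(y:=c))^^m) v = y"
proof (induction n arbitrary: v)
  case 0
  then show ?case by (intro exI[of _ 0]) simp
next
  case (Suc n)
  show ?case
  proof (cases "v = y")
    case True
    then show ?thesis by (intro exI[of _ 0]) simp
  next
    case False
    from Suc.prems have "(g^^n) (g v) = y" by (simp add: funpow_Suc_right del: funpow.simps)
    then obtain m where "((g(y:=c))^^m) (g v) = y" using Suc.IH by blast
    then have "((g(y:=c))^^(Suc m)) v = y" using False
      by (simp add: funpow_Suc_right del: funpow.simps)
    then show ?thesis by blast
  qed
qed

lemma gw_upd:
  "gw r (f(x:=u)) = tw r x f * r x u"
proof -
  have "gw r (f(x:=u)) = r x u * (\<Prod>v\<in>UNIV-{x}. r v ((f(x:=u)) v))"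
    unfolding gw_def by (subst prod.remove[of _ x]) auto
  also have "(\<Prod>v\<in>UNIV-{x}. r v ((f(x:=u)) v)) = tw r x f"
    unfolding tw_def by (intro prod.cong) auto
  finally show ?thesis by (simp add: ac_simps fun_upd_def)
qed

lemma rhs_bij:
  assumes offd: "\<And>a b. (a,b) \<in> B \<Longrightarrow> a \<noteq> b"
  shows "(\<Sum>p\<in>(SIGMA u:{u. (z,u) \<in> B}. trees B z). tw r z (snd p) * r z (fst p))
         = (\<Sum>g\<in>cyc B z. gw r g)"
proof (rule sum.reindex_bij_witness[where j = "\<lambda>p. (snd p)(z := fst p)" and i = "\<lambda>g. (g z, g(z:=z))"])
  fix p assume p: "p \<in> (SIGMA u:{u. (z,u) \<in> B}. trees B z)"
  obtain u f where pf: "p = (u,f)" by fastforce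
  from p pf have u: "(z,u) \<in> B" and f: "f \<in> trees B z" by auto
  have fz: "f z = z" using f by (simp add: trees_def)
  show "(((snd p)(z := fst p)) z, ((snd p)(z := fst p))(z := z)) = p"
    using pf fz by auto
  show "(snd p)(z := fst p) \<in> cyc B z"
    unfolding cyc_def
  proof (intro CollectI conjI allI)
    fix v
    show "(v, ((snd p)(z := fst p)) v) \<in> B"
      using u f pf by (cases "v = z") (auto simp: trees_def)
    obtain n where "(f^^n) v = z" using f by (auto simp: trees_def)
    from reach_upd[OF this, of u] show "\<exists>n. (((snd p)(z := fst p))^^n) v = z"
      using pf by simp
  qed
  show "gw r ((snd p)(z := fst p)) = tw r z (snd p) * r z (fst p)"
    by (simp add: gw_upd)
next
  fix g assume g: "g \<in> cyc B z"
  show "(snd (g z, g(z := z)))(z := fst (g z, g(z := z))) = g" by simp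
  show "(g z, g(z := z)) \<in> (SIGMA u:{u. (z,u) \<in> B}. trees B z)"
  proof -
    have "(z, g z) \<in> B" using g by (simp add: cyc_def)
    moreover have "g(z:=z) \<in> trees B z"
      unfolding trees_def
    proof (intro CollectI conjI allI impI)
      fix v
      show "v \<noteq> z \<Longrightarrow> (v, (g(z:=z)) v) \<in> B" using g by (simp add: cyc_def)
      obtain n where "(g^^n) v = z" using g by (auto simp: cyc_def)
      from reach_upd[OF this, of z] show "\<exists>n. ((g(z:=z))^^n) v = z" .
    qed simp
    ultimately show ?thesis by simp
  qed
qed

definition pr :: "('a \<Rightarrow> 'a) \<Rightarrow> 'a \<Rightarrow> 'a" where
  "pr g z = (g^^(LEAST k. g ((g^^k) z) = z)) z"

lemma pr_upd:
  assumes f: "f \<in> trees B y" and yz: "y \<noteq> z"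
  shows "pr (f(y:=z)) z = y"
proof -
  define g where "g = f(y:=z)"
  have "\<exists>n. (f^^n) z = y" using f by (auto simp: trees_def)
  define k0 where "k0 = (LEAST k. (f^^k) z = y)"
  have k0: "(f^^k0) z = y" unfolding k0_def by (rule LeastI_ex) fact
  have k0m: "(f^^k) z \<noteq> y" if "k < k0" for k
    using not_less_Least[of k "\<lambda>k. (f^^k) z = y"] that unfolding k0_def by blast
  have agree: "(g^^i) z = (f^^i) z" if "i \<le> k0" for i
    using that
  proof (induction i)
    case 0 then show ?case by simp
  next
    case (Suc i)
    then have "(f^^i) z \<noteq> y" using k0m by simp
    then show ?case using Suc by (simp add: g_def)
  qed
  have P0: "g ((g^^k0) z) = z" using agree[of k0] k0 by (simp add: g_def)
  have notP: "g ((g^^k) z) \<noteq> z" if "k < k0" for k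
  proof
    assume eq: "g ((g^^k) z) = z"
    have "g ((g^^k) z) = f ((f^^k) z)" using agree[of k] that k0m[OF that] by (simp add: g_def)
    then have fs: "(f^^Suc k) z = z" using eq by simp
    define d where "d = k0 - Suc k"
    have "(f^^d) z = (f^^d) ((f^^Suc k) z)" using fs by simp
    also have "\<dots> = (f^^(d + Suc k)) z" by (simp only: funpow_add comp_def)
    also have "d + Suc k = k0" using that by (simp add: d_def)
    finally have "(f^^d) z = y" using k0 by simp
    moreover have "d < k0" using that by (simp add: d_def)
    ultimately show False using k0m by blast
  qed
  have "(LEAST k. g ((g^^k) z) = z) = k0"
    by (rule Least_equality) (use P0 notP in \<open>auto simp: not_less[symmetric]\<close>)
  then have "pr g z = (g^^k0) z" by (simp add: pr_def)
  also have "\<dots> = y" using agree[of k0] k0 by simp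
  finally show ?thesis by (simp add: g_def)
qed

lemma pr_props:
  assumes g: "g \<in> cyc B z"
  shows "g (pr g z) = z" "\<exists>k. (g^^k) z = pr g z"
proof -
  have "(z, g z) \<in> B" using g by (simp add: cyc_def)
  obtain n where "(g^^n) (g z) = z" using g by (auto simp: cyc_def)
  then have "g ((g^^n) z) = z" by (simp add: funpow_swap1)
  then have "g ((g^^(LEAST k. g ((g^^k) z) = z)) z) = z" by (rule LeastI)
  then show "g (pr g z) = z" by (simp add: pr_def)
  show "\<exists>k. (g^^k) z = pr g z" by (auto simp: pr_def)
qed

lemma lhs_bij:
  assumes offd: "\<And>a b. (a,b) \<in> B \<Longrightarrow> a \<noteq> b"
  shows "(\<Sum>p\<in>(SIGMA y:{y. (y,z) \<in> B}. trees B y). tw r (fst p) (snd p) * r (fst p) z)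
         = (\<Sum>g\<in>cyc B z. gw r g)"
proof (rule sum.reindex_bij_witness[where j = "\<lambda>p. (snd p)(fst p := z)" and i = "\<lambda>g. (pr g z, g(pr g z := pr g z))"])
  fix p assume p: "p \<in> (SIGMA y:{y. (y,z) \<in> B}. trees B y)"
  obtain y f where pf: "p = (y,f)" by fastforce
  from p pf have y: "(y,z) \<in> B" and f: "f \<in> trees B y" by auto
  have yz: "y \<noteq> z" using offd[OF y] .
  have fy: "f y = y" using f by (simp add: trees_def)
  show "(pr ((snd p)(fst p := z)) z, ((snd p)(fst p := z))(pr ((snd p)(fst p := z)) z := pr ((snd p)(fst p := z)) z)) = p"
    using pf pr_upd[OF f yz] fy by auto
  show "(snd p)(fst p := z) \<in> cyc B z"
    unfolding cyc_def
  proof (intro CollectI conjI allI)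
    fix v
    show "(v, ((snd p)(fst p := z)) v) \<in> B"
      using y f pf by (cases "v = y") (auto simp: trees_def)
    obtain n where "(f^^n) v = y" using f by (auto simp: trees_def)
    from reach_upd[OF this, of z] obtain m where "((f(y:=z))^^m) v = y" by blast
    then have "((f(y:=z))^^(Suc m)) v = z" by simp
    then show "\<exists>n. (((snd p)(fst p := z))^^n) v = z"
      using pf by (metis fst_conv snd_conv)
  qed
  show "gw r ((snd p)(fst p := z)) = tw r (fst p) (snd p) * r (fst p) z"
    by (simp add: gw_upd)
next
  fix g assume g: "g \<in> cyc B z"
  define y where "y = pr g z"
  have gy: "g y = z" using pr_props[OF g] by (simp add: y_def)
  obtain k where k: "(g^^k) z = y" using pr_props[OF g] by (auto simp: y_def)
  show "(snd (pr g z, g(pr g z := pr g z)))(fst (pr g z, g(pr g z := pr g z)) := z) = g"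
    using gy by (simp add: y_def[symmetric] fun_upd_idem)
  show "(pr g z, g(pr g z := pr g z)) \<in> (SIGMA y:{y. (y,z) \<in> B}. trees B y)"
  proof -
    have "(y, g y) \<in> B" using g by (simp add: cyc_def)
    then have "(y, z) \<in> B" using gy by simp
    moreover have "g(y:=y) \<in> trees B y"
      unfolding trees_def
    proof (intro CollectI conjI allI impI)
      fix v
      show "v \<noteq> y \<Longrightarrow> (v, (g(y:=y)) v) \<in> B" using g by (simp add: cyc_def)
      obtain n where n: "(g^^n) v = z" using g by (auto simp: cyc_def)
      have "(g^^(k + n)) v = y" using n k by (simp add: funpow_add)
      from reach_upd[OF this, of y] show "\<exists>n. ((g(y:=y))^^n) v = y" .
    qed simp
    ultimately show ?thesis by (simp add: y_def)
  qed
qed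

lemma tree_balance:
  fixes r :: "'a::finite \<Rightarrow> 'a \<Rightarrow> real"
  assumes offd: "\<And>a b. (a,b) \<in> B \<Longrightarrow> a \<noteq> b"
    and zero: "\<And>a b. a \<noteq> b \<Longrightarrow> (a,b) \<notin> B \<Longrightarrow> r a b = 0"
  shows "(\<Sum>y\<in>UNIV-{z}. wt B r y * r y z) = wt B r z * (\<Sum>u\<in>UNIV-{z}. r z u)"
proof -
  have "(\<Sum>y\<in>UNIV-{z}. wt B r y * r y z) = (\<Sum>y\<in>UNIV-{z}. \<Sum>f\<in>trees B y. tw r y f * r y z)"
    by (simp add: wt_def sum_distrib_right)
  also have "\<dots> = (\<Sum>y\<in>{y. (y,z) \<in> B}. \<Sum>f\<in>trees B y. tw r y f * r y z)"
    by (rule sum.mono_neutral_right) (auto dest: offd simp: zero)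
  also have "\<dots> = (\<Sum>p\<in>(SIGMA y:{y. (y,z) \<in> B}. trees B y). tw r (fst p) (snd p) * r (fst p) z)"
    by (subst sum.Sigma) (auto simp: split_beta)
  also have "\<dots> = (\<Sum>g\<in>cyc B z. gw r g)" by (rule lhs_bij[OF offd])
  also have "\<dots> = (\<Sum>p\<in>(SIGMA u:{u. (z,u) \<in> B}. trees B z). tw r z (snd p) * r z (fst p))"
    by (rule rhs_bij[OF offd, symmetric])
  also have "\<dots> = (\<Sum>u\<in>{u. (z,u) \<in> B}. \<Sum>f\<in>trees B z. tw r z f * r z u)"
    by (subst sum.Sigma) (auto simp: split_beta)
  also have "\<dots> = (\<Sum>u\<in>UNIV-{z}. \<Sum>f\<in>trees B z. tw r z f * r z u)"
  proof (rule sum.mono_neutral_left)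
    show "\<forall>i\<in>UNIV - {z} - {u. (z, u) \<in> B}. (\<Sum>f\<in>trees B z. tw r z f * r z i) = 0"
    proof
      fix i assume "i \<in> UNIV - {z} - {u. (z, u) \<in> B}"
      then have "r z i = 0" using zero by auto
      then show "(\<Sum>f\<in>trees B z. tw r z f * r z i) = 0" by simp
    qed
  qed (auto dest: offd)
  also have "\<dots> = wt B r z * (\<Sum>u\<in>UNIV-{z}. r z u)"
    by (simp add: wt_def sum_distrib_right sum_distrib_left)
  finally show ?thesis .
qed


lemma cross:
  assumes "(v,w) \<in> B\<^sup>+" "v \<notin> S" "w \<in> S"
  shows "\<exists>a b. (a,b) \<in> B \<and> a \<notin> S \<and> b \<in> S"
  using assms
proof (induction rule: trancl_induct)
  case (base y)
  then show ?case by blast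
next
  case (step y z)
  then show ?case by (cases "y \<in> S") auto
qed

lemma orbit_upd:
  assumes cl: "\<forall>v\<in>S. f v \<in> S" and a: "a \<notin> S" and v: "v \<in> S"
  shows "((f(a:=c))^^n) v = (f^^n) v \<and> (f^^n) v \<in> S"
proof (induction n)
  case 0 then show ?case using v by simp
next
  case (Suc n)
  then have "(f^^n) v \<noteq> a" using a by auto
  then show ?case using Suc cl by simp
qed

lemma tree_exists:
  fixes B :: "('a::finite \<times> 'a) set"
  assumes irr: "\<And>u v. u \<noteq> v \<Longrightarrow> (u,v) \<in> B\<^sup>+"
  shows "trees B x \<noteq> {}"
proof -
  define P where "P S f \<longleftrightarrow> f x = x \<and> (\<forall>v\<in>S-{x}. (v, f v) \<in> B) \<and> (\<forall>v\<in>S. f v \<in> S)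
      \<and> (\<forall>v\<in>S. \<exists>n. (f^^n) v = x)" for S and f :: "'a \<Rightarrow> 'a"
  have main: "n \<le> card (UNIV::'a set) \<Longrightarrow> \<exists>S f. x \<in> S \<and> n \<le> card S \<and> P S f" for n
  proof (induction n)
    case 0
    have "P {x} (\<lambda>v. v)" unfolding P_def by (auto intro: exI[of _ 0])
    then show ?case by blast
  next
    case (Suc n)
    then obtain S f where S: "x \<in> S" "n \<le> card S" "P S f" by auto
    show ?case
    proof (cases "Suc n \<le> card S")
      case True then show ?thesis using S by blast
    next
      case False
      then have cS: "card S = n" using S by simp
      then have "S \<noteq> UNIV" using Suc.prems by auto
      then obtain v0 where v0: "v0 \<notin> S" by auto
      then have "v0 \<noteq> x" using S by auto
      from cross[OF irr[OF this] v0 S(1)] obtain a b where ab: "(a,b) \<in> B" "a \<notin> S" "b \<in> S"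
        by blast
      define f' where "f' = f(a:=b)"
      have cl: "\<forall>v\<in>S. f v \<in> S" using S(3) by (simp add: P_def)
      have ax: "a \<noteq> x" using ab S by auto
      have "P (insert a S) f'"
        unfolding P_def
      proof (intro conjI ballI)
        show "f' x = x" using S(3) ax by (simp add: P_def f'_def)
      next
        fix v assume "v \<in> insert a S - {x}"
        then show "(v, f' v) \<in> B" using S(3) ab by (cases "v = a") (auto simp: P_def f'_def)
      next
        fix v assume "v \<in> insert a S"
        then show "f' v \<in> insert a S" using cl ab by (cases "v = a") (auto simp: f'_def)
      next
        have reachS: "\<exists>n. (f'^^n) v = x" if v: "v \<in> S" for v
        proof -
          obtain n where "(f^^n) v = x" using S(3) v by (auto simp: P_def)
          then show ?thesis using orbit_upd[OF cl ab(2) v, where c=b and n=n] by (auto simp: f'_def)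
        qed
        fix v assume v: "v \<in> insert a S"
        show "\<exists>n. (f'^^n) v = x"
        proof (cases "v = a")
          case True
          obtain m where "(f'^^m) b = x" using reachS[OF ab(3)] by blast
          then have "(f'^^(Suc m)) a = x" by (simp add: funpow_Suc_right f'_def del: funpow.simps)
          then show ?thesis using True by blast
        next
          case False then show ?thesis using v reachS by auto
        qed
      qed
      moreover have "card (insert a S) = Suc n" using ab(2) cS by simp
      ultimately show ?thesis using S(1) by (intro exI[of _ "insert a S"] exI[of _ f']) simp
    qed
  qed
  obtain S f where S: "x \<in> S" "card (UNIV::'a set) \<le> card S" "P S f" using main by blast
  have "S = UNIV" using S(2) by (metis card_seteq finite subset_UNIV)
  then have "f \<in> trees B x" using S(3) by (auto simp: P_def trees_def)
  then show ?thesis by blast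
qed

definition bal :: "('a::finite \<Rightarrow> 'a \<Rightarrow> real) \<Rightarrow> ('a \<Rightarrow> real) \<Rightarrow> bool" where
  "bal r \<nu> \<longleftrightarrow> (\<forall>y. (\<Sum>x\<in>UNIV-{y}. \<nu> x * r x y) = \<nu> y * (\<Sum>z\<in>UNIV-{y}. r y z))"

lemma zero_step:
  fixes r :: "'a::finite \<Rightarrow> 'a \<Rightarrow> real"
  assumes rnn: "\<And>a b. a \<noteq> b \<Longrightarrow> r a b \<ge> 0" and posB: "\<And>a b. (a,b) \<in> B \<Longrightarrow> r a b > 0"
    and offd: "\<And>a b. (a,b) \<in> B \<Longrightarrow> a \<noteq> b"
    and nn: "\<And>x. \<nu> x \<ge> 0" and b: "bal r \<nu>" and y: "\<nu> y = 0" and xy: "(x,y) \<in> B"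
  shows "\<nu> x = 0"
proof -
  have "(\<Sum>x\<in>UNIV-{y}. \<nu> x * r x y) = 0" using b y by (simp add: bal_def)
  moreover have "\<forall>x\<in>UNIV-{y}. \<nu> x * r x y \<ge> 0" using nn rnn by auto
  ultimately have "\<forall>x\<in>UNIV-{y}. \<nu> x * r x y = 0" using sum_nonneg_eq_0_iff[of "UNIV-{y}" "\<lambda>x. \<nu> x * r x y"] by simp
  moreover have "x \<in> UNIV-{y}" using offd[OF xy] by simp
  ultimately have "\<nu> x * r x y = 0" by blast
  then show ?thesis using posB[OF xy] by simp
qed

lemma zero_prop:
  fixes r :: "'a::finite \<Rightarrow> 'a \<Rightarrow> real"
  assumes rnn: "\<And>a b. a \<noteq> b \<Longrightarrow> r a b \<ge> 0" and posB: "\<And>a b. (a,b) \<in> B \<Longrightarrow> r a b > 0"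
    and offd: "\<And>a b. (a,b) \<in> B \<Longrightarrow> a \<noteq> b"
    and nn: "\<And>x. \<nu> x \<ge> 0" and b: "bal r \<nu>" and y: "\<nu> y = 0" and xy: "(x,y) \<in> B\<^sup>+"
  shows "\<nu> x = 0"
  using xy
proof (induction rule: converse_trancl_induct)
  case (base x)
  then show ?case using zero_step[where r=r and B=B and \<nu>=\<nu>, OF rnn posB offd nn b y] by blast
next
  case (step u u')
  then show ?case using zero_step[where r=r and B=B and \<nu>=\<nu>, OF rnn posB offd nn b, where y=u' and x=u] by blast
qed

lemma all_pos:
  fixes r :: "'a::finite \<Rightarrow> 'a \<Rightarrow> real"
  assumes rnn: "\<And>a b. a \<noteq> b \<Longrightarrow> r a b \<ge> 0" and posB: "\<And>a b. (a,b) \<in> B \<Longrightarrow> r a b > 0"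
    and offd: "\<And>a b. (a,b) \<in> B \<Longrightarrow> a \<noteq> b"
    and irr: "\<And>u v. u \<noteq> v \<Longrightarrow> (u,v) \<in> B\<^sup>+"
    and nn: "\<And>x. \<nu> x \<ge> 0" and b: "bal r \<nu>" and ne: "\<nu> zz \<noteq> 0"
  shows "\<nu> x > 0"
proof (rule ccontr)
  assume "\<not> \<nu> x > 0"
  then have x: "\<nu> x = 0" using nn[of x] by simp
  have "\<nu> zz = 0"
  proof (cases "zz = x")
    case True then show ?thesis using x by simp
  next
    case False
    show ?thesis
      by (rule zero_prop[where r=r and B=B and \<nu>=\<nu> and y=x]) (use rnn posB offd nn b x irr[OF False] in auto)
  qed
  then show False using ne by simp
qed

lemma proportional:
  fixes r :: "'a::finite \<Rightarrow> 'a \<Rightarrow> real"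
  assumes rnn: "\<And>a b. a \<noteq> b \<Longrightarrow> r a b \<ge> 0" and posB: "\<And>a b. (a,b) \<in> B \<Longrightarrow> r a b > 0"
    and offd: "\<And>a b. (a,b) \<in> B \<Longrightarrow> a \<noteq> b"
    and irr: "\<And>u v. u \<noteq> v \<Longrightarrow> (u,v) \<in> B\<^sup>+"
    and mpos: "\<And>x. \<mu> x > 0" and bm: "bal r \<mu>"
    and wpos: "\<And>x. w x > 0" and bw: "bal r w"
  shows "\<mu> x / \<mu> y = w x / w y"
proof -
  define c where "c = Max (range (\<lambda>x. w x / \<mu> x))"
  have cge: "w x / \<mu> x \<le> c" for x unfolding c_def by (rule Max_ge) auto
  have "c \<in> range (\<lambda>x. w x / \<mu> x)" unfolding c_def by (rule Max_in) auto
  then obtain x0 where x0: "c = w x0 / \<mu> x0" by auto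
  define \<nu> where "\<nu> x = c * \<mu> x - w x" for x
  have nn: "\<nu> x \<ge> 0" for x
    using cge[of x] mpos[of x] by (simp add: \<nu>_def pos_divide_le_eq)
  have bn: "bal r \<nu>"
    unfolding bal_def
  proof
    fix y
    have "(\<Sum>x\<in>UNIV-{y}. \<nu> x * r x y) = c * (\<Sum>x\<in>UNIV-{y}. \<mu> x * r x y) - (\<Sum>x\<in>UNIV-{y}. w x * r x y)"
      by (simp add: \<nu>_def algebra_simps sum_subtractf sum_distrib_left)
    also have "\<dots> = \<nu> y * (\<Sum>z\<in>UNIV-{y}. r y z)"
      using bm bw by (simp add: bal_def \<nu>_def algebra_simps)
    finally show "(\<Sum>x\<in>UNIV-{y}. \<nu> x * r x y) = \<nu> y * (\<Sum>z\<in>UNIV-{y}. r y z)" .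
  qed
  have "\<nu> x0 = 0" using x0 mpos[of x0] by (simp add: \<nu>_def)
  have "\<nu> x = 0" for x
  proof (rule ccontr)
    assume nx: "\<nu> x \<noteq> 0"
    have "\<nu> x0 > 0"
      by (rule all_pos[where r=r and B=B and \<nu>=\<nu> and zz=x]) (use rnn posB offd irr nn bn nx in auto)
    then show False using \<open>\<nu> x0 = 0\<close> by simp
  qed
  then have w: "w x = c * \<mu> x" for x by (simp add: \<nu>_def)
  have "c > 0" using w[of x] wpos[of x] mpos[of x] by (simp add: zero_less_mult_iff)
  then show ?thesis using w[of x] w[of y] mpos[of y] by simp
qed


theorem lemma3p2:
  fixes R :: "nat \<Rightarrow> 'a::finite \<Rightarrow> 'a \<Rightarrow> real"
    and \<mu> :: "nat \<Rightarrow> 'a \<Rightarrow> real"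
  assumes rates: "\<And>N. N \<ge> 1 \<Longrightarrow> rate_matrix (R N)"
    and irred: "\<And>N. N \<ge> 1 \<Longrightarrow> irreducible_rates (R N)"
    and inv: "\<And>N. N \<ge> 1 \<Longrightarrow> invariant_prob (R N) (\<mu> N)"
    and A: "assumption_A R"
  shows "ordered_family (UNIV :: 'a set) (\<lambda>\<eta> N. \<mu> N \<eta>)"
proof -
  define B where "B = bonds R"
  have offd: "\<And>a b. (a,b) \<in> B \<Longrightarrow> a \<noteq> b" by (simp add: B_def bonds_def)
  have A1: "\<forall>x y. x \<noteq> y \<longrightarrow> ((\<forall>N\<ge>1. R N x y = 0) \<or> (\<forall>N\<ge>1. R N x y > 0))"
    using A by (simp add: assumption_A_def)
  have rnn: "R N a b \<ge> 0" if "N \<ge> 1" "a \<noteq> b" for N a b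
    using rates[OF that(1)] that(2) by (simp add: rate_matrix_def)
  have posB: "R N a b > 0" if "N \<ge> 1" "(a,b) \<in> B" for N a b
  proof -
    have ab: "a \<noteq> b" "R 1 a b > 0" using that(2) by (auto simp: B_def bonds_def)
    then show ?thesis using A1 that(1) by force
  qed
  have zero: "R N a b = 0" if "N \<ge> 1" "a \<noteq> b" "(a,b) \<notin> B" for N a b
  proof -
    have "R 1 a b \<ge> 0" using rnn[of 1 a b] that by simp
    then have "\<not> R 1 a b > 0 \<Longrightarrow> R 1 a b = 0" by simp
    moreover have "\<not> R 1 a b > 0" using that by (simp add: B_def bonds_def)
    ultimately show ?thesis using A1 that by force
  qed
  have irrB: "(u,v) \<in> B\<^sup>+" if "u \<noteq> v" for u v
  proof -
    have "jump_rel (R 1) = B" by (auto simp: jump_rel_def B_def bonds_def)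
    then show ?thesis using irred[of 1] that by (simp add: irreducible_rates_def)
  qed
  have tne: "trees B x \<noteq> {}" for x by (rule tree_exists) (use irrB in auto)
  have twpos: "tw (R N) x f > 0" if "N \<ge> 1" "f \<in> trees B x" for N x f
    unfolding tw_def using that by (intro prod_pos) (auto simp: trees_def intro!: posB)
  have wpos: "wt B (R N) x > 0" if "N \<ge> 1" for N x
    unfolding wt_def using tne[of x] that by (intro sum_pos twpos) auto
  have bw: "bal (R N) (wt B (R N))" if "N \<ge> 1" for N
    unfolding bal_def using tree_balance[where B=B and r="R N"] offd zero that by blast
  have bm: "bal (R N) (\<mu> N)" if "N \<ge> 1" for N
    using inv[OF that] by (simp add: bal_def invariant_prob_def)
  have mnn: "\<mu> N x \<ge> 0" if "N \<ge> 1" for N x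
    using inv[OF that] by (simp add: invariant_prob_def)
  have mne: "\<exists>x. \<mu> N x \<noteq> 0" if "N \<ge> 1" for N
  proof (rule ccontr)
    assume "\<not> (\<exists>x. \<mu> N x \<noteq> 0)"
    then have "(\<Sum>x\<in>UNIV. \<mu> N x) = 0" by simp
    then show False using inv[OF that] by (simp add: invariant_prob_def)
  qed
  have mpos: "\<mu> N x > 0" if N: "N \<ge> 1" for N x
  proof -
    obtain x0 where x0: "\<mu> N x0 \<noteq> 0" using mne[OF N] by blast
    show ?thesis
      by (rule all_pos[where r="R N" and B=B and \<nu>="\<mu> N" and zz=x0])
        (use rnn posB offd irrB mnn bm N x0 in auto)
  qed
  have ratio: "\<mu> N x / \<mu> N y = wt B (R N) x / wt B (R N) y" if N: "N \<ge> 1" for N x y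
    by (rule proportional[where r="R N" and B=B])
      (use rnn posB offd irrB mpos bm wpos bw N in auto)
  have conv: "convergent (\<lambda>N. arctan (\<mu> N r / \<mu> N s))" if rs: "r \<noteq> s" for r s
  proof -
    define m where "m = card (UNIV::'a set) - 1"
    have "card {r, s} \<le> card (UNIV::'a set)" by (rule card_mono) auto
    then have m1: "m \<ge> 1" using rs by (simp add: m_def)
    define K where "K = {k :: 'a \<times> 'a \<Rightarrow> nat. (\<forall>p. p \<notin> bonds R \<longrightarrow> k p = 0) \<and> (\<Sum>p\<in>bonds R. k p) = m}"
    define a where "a = (\<lambda>k N. \<Prod>p\<in>bonds R. R N (fst p) (snd p) ^ k p)"
    have O: "ordered_family K a" using A m1 unfolding assumption_A_def K_def a_def by blast
    define kk where "kk x f p = (if fst p \<noteq> x \<and> snd p = f (fst p) then 1 else 0 :: nat)" for x and f :: "'a \<Rightarrow> 'a" and p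
    have Eeq: "B \<inter> {p. fst p \<noteq> x \<and> snd p = f (fst p)} = (\<lambda>v. (v, f v)) ` (UNIV - {x})"
      if f: "f \<in> trees B x" for x f
      using f by (auto simp: trees_def)
    have inj: "inj_on (\<lambda>v. (v, f v)) S" for f :: "'a \<Rightarrow> 'a" and S by (auto simp: inj_on_def)
    have kkK: "kk x f \<in> K" if f: "f \<in> trees B x" for x f
    proof -
      have "\<forall>p. p \<notin> bonds R \<longrightarrow> kk x f p = 0"
        using f by (auto simp: kk_def trees_def B_def)
      moreover have "(\<Sum>p\<in>B. kk x f p) = card (B \<inter> {p. fst p \<noteq> x \<and> snd p = f (fst p)})"
        unfolding kk_def by (simp add: sum.If_cases)
      moreover have "\<dots> = m"
        unfolding Eeq[OF f] m_def by (subst card_image[OF inj]) (simp add: card_Diff_singleton)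
      ultimately show ?thesis by (simp add: K_def B_def)
    qed
    have kka: "a (kk x f) N = tw (R N) x f" if f: "f \<in> trees B x" for x f N
    proof -
      let ?g = "\<lambda>p. R N (fst p) (snd p) ^ kk x f p"
      have "a (kk x f) N = (\<Prod>p\<in>B. ?g p)" by (simp add: a_def B_def)
      also have "\<dots> = (\<Prod>p\<in>B \<inter> {p. fst p \<noteq> x \<and> snd p = f (fst p)}. ?g p)"
        by (rule prod.mono_neutral_right) (auto simp: kk_def)
      also have "\<dots> = (\<Prod>v\<in>UNIV - {x}. ?g (v, f v))"
        unfolding Eeq[OF f] by (rule prod.reindex[OF inj, unfolded comp_def])
      also have "\<dots> = tw (R N) x f"
        unfolding tw_def by (intro prod.cong) (auto simp: kk_def)
      finally show ?thesis .
    qed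
    have wsum: "wt B (R N) x = (\<Sum>f\<in>trees B x. a (kk x f) N)" for x N
      unfolding wt_def by (intro sum.cong) (auto simp: kka)
    have "convergent (\<lambda>N. arctan ((\<Sum>f\<in>trees B r. a (kk r f) N) / (\<Sum>g\<in>trees B s. a (kk s g) N)))"
      by (rule ordered_sums[OF O]) (use tne kkK in auto)
    then obtain L where L: "(\<lambda>N. arctan (wt B (R N) r / wt B (R N) s)) \<longlonglongrightarrow> L"
      by (auto simp: convergent_def wsum)
    have "\<forall>\<^sub>F N in sequentially. arctan (wt B (R N) r / wt B (R N) s) = arctan (\<mu> N r / \<mu> N s)"
      unfolding eventually_sequentially using ratio by (intro exI[of _ 1]) auto
    then have "(\<lambda>N. arctan (\<mu> N r / \<mu> N s)) \<longlonglongrightarrow> L" by (rule tendsto_ev[OF L])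
    then show ?thesis by (auto simp: convergent_def)
  qed
  show ?thesis unfolding ordered_family_def using mpos conv by auto
qed

end
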